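(* Let $A$ be a finite set. The family $\mathscr U_A=\{U(\overset{*}{<})\}_{\overset{*}{<}\in R^+(A)}$ is a proper $\Sigma_A$-equivariant, good and complete open cover of the ordered configuration space $\mathrm{OConf}(A,\mathbb R^2)=\{f:A\to\mathbb R^2\mid f\text{ injective}\}$.
   Context: A strict partial order is a transitive irreflexive relation; it is semi-linear if it is induced by a surjection $h:A\to\{1,\dots,l\}$ (i.e. $a<b$ iff $h(a)<h(b)$). $<_1\bar\cup<_2$ denotes the transitive closure of the union. A double order on $A$ is a pair $\overset{*}{<}=(\overset{x}{<},\overset{y}{<})$ of strict partial orders such that any two distinct elements are comparable by $\overset{x}{<}$ or by $\overset{y}{<}$; regular if $\overset{x}{<}$ is semi-linear and $a\overset{x}{<}b$ implies $a,b$ are not $\overset{y}{<}$-comparable; semi-regular if it is the componentwise $\bar\cup$ of finitely many regular double orders. $R^+(A)$ is the set of semi-regular double orders. For a double order, $U(\overset{*}{<})=\{(f_x,f_y):A\to\mathbb R^2\mid a\overset{x}{<}b\Rightarrow f_x(a)<f_x(b),\ a\overset{y}{<}b\Rightarrow f_y(a)<f_y(b)\}$. $\Sigma_A$ acts on $\mathrm{OConf}(A,\mathbb R^2)$ by precomposition and on double orders by $(\overset{x}{<},\overset{y}{<})\sigma=(\overset{x}{<}\sigma,\overset{y}{<}\sigma)$, $a(\overset{x}{<}\sigma)b$ iff $\sigma(a)\overset{x}{<}\sigma(b)$ (similarly for $y$). A cover $\{U_i\}_{i\in I}$ is $G$-equivariant if $G$ acts on $I$ with $U_ig=U_{ig}$;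 proper if additionally $U_i\cap U_{ig}=\emptyset$ for $g\ne1$; good if all non-empty intersections are contractible; complete if closed under non-empty intersections. *)

theory Defs
  imports "HOL-Analysis.Analysis" "HOL-Combinatorics.Permutations"
begin

definition strict_po :: "'a set \<Rightarrow> 'a rel \<Rightarrow> bool" where
  "strict_po A r \<longleftrightarrow> r \<subseteq> A \<times> A \<and> trans r \<and> (\<forall>a. (a, a) \<notin> r)"

definition semi_linear :: "'a set \<Rightarrow> 'a rel \<Rightarrow> bool" where
  "semi_linear A r \<longleftrightarrow> r \<subseteq> A \<times> A \<and>
     (\<exists>(h :: 'a \<Rightarrow> nat) l. h ` A = {1..l} \<and> (\<forall>a\<in>A. \<forall>b\<in>A. (a, b) \<in> r \<longleftrightarrow> h a < h b))"

text \<open>Double orders: pairs (x-order, y-order).\<close>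
definition double_order :: "'a set \<Rightarrow> 'a rel \<times> 'a rel \<Rightarrow> bool" where
  "double_order A d \<longleftrightarrow> strict_po A (fst d) \<and> strict_po A (snd d) \<and>
     (\<forall>a\<in>A. \<forall>b\<in>A. a \<noteq> b \<longrightarrow>
        (a, b) \<in> fst d \<or> (b, a) \<in> fst d \<or> (a, b) \<in> snd d \<or> (b, a) \<in> snd d)"

definition regular_double_order :: "'a set \<Rightarrow> 'a rel \<times> 'a rel \<Rightarrow> bool" where
  "regular_double_order A d \<longleftrightarrow> double_order A d \<and> semi_linear A (fst d) \<and>
     (\<forall>a b. (a, b) \<in> fst d \<longrightarrow> (a, b) \<notin> snd d \<and> (b, a) \<notin> snd d)"

definition semi_regular :: "'a set \<Rightarrow> 'a rel \<times> 'a rel \<Rightarrow> bool" where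
  "semi_regular A d \<longleftrightarrow> double_order A d \<and>
     (\<exists>S. finite S \<and> S \<noteq> {} \<and> (\<forall>e\<in>S. regular_double_order A e) \<and>
          d = (trancl (\<Union>(fst ` S)), trancl (\<Union>(snd ` S))))"

definition Rplus :: "'a set \<Rightarrow> ('a rel \<times> 'a rel) set" where
  "Rplus A = {d. semi_regular A d}"

definition OConf :: "'a set \<Rightarrow> ('a \<Rightarrow> real \<times> real) set" where
  "OConf A = {f \<in> PiE A (\<lambda>_. UNIV). inj_on f A}"

definition Uset :: "'a set \<Rightarrow> 'a rel \<times> 'a rel \<Rightarrow> ('a \<Rightarrow> real \<times> real) set" where
  "Uset A d = {f \<in> PiE A (\<lambda>_. UNIV).
      (\<forall>a b. (a, b) \<in> fst d \<longrightarrow> fst (f a) < fst (f b)) \<and>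
      (\<forall>a b. (a, b) \<in> snd d \<longrightarrow> snd (f a) < snd (f b))}"

definition confspace :: "'a set \<Rightarrow> ('a \<Rightarrow> real \<times> real) topology" where
  "confspace A = product_topology (\<lambda>_. euclidean) A"

definition dact :: "'a rel \<times> 'a rel \<Rightarrow> ('a \<Rightarrow> 'a) \<Rightarrow> 'a rel \<times> 'a rel" where
  "dact d \<sigma> = ({(a, b). (\<sigma> a, \<sigma> b) \<in> fst d}, {(a, b). (\<sigma> a, \<sigma> b) \<in> snd d})"

definition cact :: "('a \<Rightarrow> real \<times> real) \<Rightarrow> ('a \<Rightarrow> 'a) \<Rightarrow> ('a \<Rightarrow> real \<times> real)" where
  "cact f \<sigma> = f \<circ> \<sigma>"

end

theory Submission
  imports Defs
begin


lemma convex_contractible: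
  fixes C :: "('a \<Rightarrow> real \<times> real) set"
  assumes sub: "C \<subseteq> PiE A (\<lambda>_. UNIV)" and a0: "a0 \<in> C"
    and conv: "\<And>f g t. f\<in>C \<Longrightarrow> g\<in>C \<Longrightarrow> 0\<le>t \<Longrightarrow> t\<le>1 \<Longrightarrow>
       (\<lambda>i. if i\<in>A then (1-t) *\<^sub>R f i + t *\<^sub>R g i else undefined) \<in> C"
  shows "contractible_space (subtopology (product_topology (\<lambda>_. euclidean) A) C)"
proof -
  define X where "X = subtopology (product_topology (\<lambda>_. euclidean::(real\<times>real) topology) A) C"
  define H where "H = (\<lambda>(t::real,f::'a\<Rightarrow>real\<times>real). (\<lambda>i. if i\<in>A then (1-t) *\<^sub>R f i + t *\<^sub>R a0 i else undefined))"
  define h where "h = (\<lambda>(t::real,f::'a\<Rightarrow>real\<times>real). if t = 0 then f else if t = 1 then a0 else H (t,f))"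
  have tX: "topspace X = C" using sub by (auto simp: X_def)
  have Hc: "continuous_map (prod_topology (top_of_set {0..1::real}) X) X H"
  proof -
    have "continuous_map (prod_topology (top_of_set {0..1::real}) X) (product_topology (\<lambda>_. euclidean) A) H"
      unfolding continuous_map_componentwise
    proof (intro conjI ballI)
      show "H ` topspace (prod_topology (top_of_set {0..1}) X) \<subseteq> extensional A"
        by (rule image_subsetI) (simp add: H_def extensional_def case_prod_beta)
      fix k assume k: "k \<in> A"
      have c1: "continuous_map (prod_topology (top_of_set {0..1::real}) X) euclidean (\<lambda>p. (fst p, snd p k))"
        unfolding prod_topology_euclidean[symmetric]
        apply (intro continuous_map_pairedI)
        subgoal by (rule continuous_map_into_fulltopology[OF continuous_map_fst])
        subgoal unfolding X_def
          using continuous_map_compose[OF continuous_map_snd continuous_map_from_subtopology[OF continuous_map_product_projection[OF k]], of "top_of_set {0..1::real}" "\<lambda>_. euclidean" C]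
          by (simp add: o_def)
        done
      have c2: "continuous_map euclidean euclidean (\<lambda>q::real\<times>(real\<times>real). (1 - fst q) *\<^sub>R snd q + fst q *\<^sub>R a0 k)"
        unfolding continuous_map_iff_continuous2 by (intro continuous_intros)
      have "continuous_map (prod_topology (top_of_set {0..1::real}) X) euclidean
             ((\<lambda>q::real\<times>(real\<times>real). (1 - fst q) *\<^sub>R snd q + fst q *\<^sub>R a0 k) \<circ> (\<lambda>p. (fst p, snd p k)))"
        using c1 c2 by (rule continuous_map_compose)
      then show "continuous_map (prod_topology (top_of_set {0..1}) X) euclidean (\<lambda>x. H x k)"
        using k by (simp add: H_def o_def case_prod_beta)
    qed
    moreover have "H ` topspace (prod_topology (top_of_set {0..1::real}) X) \<subseteq> C"
    proof (rule image_subsetI)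
      fix p assume "p \<in> topspace (prod_topology (top_of_set {0..1::real}) X)"
      then have "fst p \<in> {0..1}" "snd p \<in> C" using tX by (auto simp: topspace_prod_topology)
      then show "H p \<in> C" using conv[of "snd p" a0 "fst p"] a0 by (simp add: H_def case_prod_beta)
    qed
    ultimately show ?thesis unfolding X_def by (simp add: continuous_map_in_subtopology image_subset_iff Pi_iff)
  qed
  have hc: "continuous_map (prod_topology (top_of_set {0..1::real}) X) X h"
  proof (rule continuous_map_eq[OF Hc])
    fix p assume "p \<in> topspace (prod_topology (top_of_set {0..1::real}) X)"
    then obtain t f where p: "p = (t,f)" "f \<in> C" using tX by (cases p) (simp add: topspace_prod_topology)
    have fA: "f \<in> PiE A (\<lambda>_. UNIV)" "a0 \<in> PiE A (\<lambda>_. UNIV)" using sub p a0 by auto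
    show "H p = h p" using fA unfolding p H_def h_def
      by (auto simp: fun_eq_iff PiE_def extensional_def)
  qed
  have "homotopic_with (\<lambda>x. True) X X id (\<lambda>x. a0)"
    unfolding homotopic_with_def
    apply (rule exI[of _ h])
    using hc by (auto simp: h_def)
  then show ?thesis unfolding contractible_space_def X_def by blast
qed



lemma mono_trancl:
  fixes \<phi> :: "'a \<Rightarrow> real"
  assumes "\<And>a b. (a,b)\<in>R \<Longrightarrow> \<phi> a < \<phi> b" "(a,b) \<in> R\<^sup>+"
  shows "\<phi> a < \<phi> b"
  using assms(2) by (induct rule: trancl_induct) (use assms(1) in force)+

lemma count_lemma:
  fixes \<phi> \<psi> :: "'a \<Rightarrow> real"
  assumes fin: "finite B" and tB: "\<tau> ` B \<subseteq> B" and tinj: "inj_on \<tau> B"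
    and tp: "\<And>b. b\<in>B \<Longrightarrow> \<phi> (\<tau> b) = \<psi> b"
    and mphi: "\<And>x y. (x,y)\<in>R \<Longrightarrow> x\<in>B \<Longrightarrow> y\<in>B \<Longrightarrow> \<phi> x < \<phi> y"
    and mpsi: "\<And>x y. (x,y)\<in>R \<Longrightarrow> x\<in>B \<Longrightarrow> y\<in>B \<Longrightarrow> \<psi> x < \<psi> y"
    and aB: "a\<in>B" and cB: "c\<in>B" and eq: "\<phi> a = \<psi> c"
    and nt: "\<And>b. b\<in>B \<Longrightarrow> (a,c)\<in>R \<Longrightarrow> (a,b)\<in>R \<or> (b,c)\<in>R"
  shows "(a,c) \<notin> R"
proof
  assume ac: "(a,c)\<in>R"
  define X where "X = {b\<in>B. (b,c)\<in>R}"
  define Y where "Y = {b\<in>B. b\<noteq>a \<and> (a,b)\<notin>R}"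
  have "\<tau> ` X \<subseteq> Y"
  proof
    fix y assume "y \<in> \<tau> ` X"
    then obtain b where b: "b\<in>B" "(b,c)\<in>R" "y = \<tau> b" by (auto simp: X_def)
    have "\<psi> b < \<psi> c" using mpsi b cB by blast
    then have lt: "\<phi> y < \<phi> a" using tp b eq by simp
    have yB: "y \<in> B" using tB b by blast
    have "(a,y)\<notin>R" using mphi[of a y] aB yB lt by linarith
    then show "y \<in> Y" using lt yB by (auto simp: Y_def)
  qed
  then have "card (\<tau> ` X) \<le> card Y" by (intro card_mono) (auto simp: Y_def fin)
  moreover have "card (\<tau> ` X) = card X"
    by (rule card_image) (rule inj_on_subset[OF tinj], auto simp: X_def)
  moreover have "insert a Y \<subseteq> X" using ac aB nt by (auto simp: X_def Y_def)
  then have "card (insert a Y) \<le> card X" by (intro card_mono) (auto simp: X_def fin)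
  moreover have "card (insert a Y) = Suc (card Y)"
    by (rule card_insert_disjoint) (auto simp: Y_def fin)
  ultimately show False by simp
qed

lemma regular_unique:
  assumes fin: "finite A" and reg: "regular_double_order A e" and sp: "\<sigma> permutes A"
    and f1: "f \<in> Uset A e" and f2: "f \<in> Uset A (dact e \<sigma>)"
  shows "\<sigma> = id"
proof -
  have do: "double_order A e" and sl: "semi_linear A (fst e)"
    and rg: "\<And>a b. (a, b) \<in> fst e \<Longrightarrow> (a, b) \<notin> snd e \<and> (b, a) \<notin> snd e"
    using reg by (auto simp: regular_double_order_def)
  obtain h :: "'a \<Rightarrow> nat" where hr: "\<And>a b. a\<in>A \<Longrightarrow> b\<in>A \<Longrightarrow> (a, b) \<in> fst e \<longleftrightarrow> h a < h b"
    using sl unfolding semi_linear_def by blast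
  have spo1: "strict_po A (fst e)" and spo2: "strict_po A (snd e)"
    and cmp: "\<And>a b. a\<in>A \<Longrightarrow> b\<in>A \<Longrightarrow> a \<noteq> b \<Longrightarrow>
        (a, b) \<in> fst e \<or> (b, a) \<in> fst e \<or> (a, b) \<in> snd e \<or> (b, a) \<in> snd e"
    using do by (auto simp: double_order_def)
  have sub2: "snd e \<subseteq> A \<times> A" and tr2: "trans (snd e)" using spo2 by (auto simp: strict_po_def)
  define g where "g = f \<circ> inv \<sigma>"
  have si: "\<And>x. \<sigma> (inv \<sigma> x) = x" "\<And>x. inv \<sigma> (\<sigma> x) = x"
    using permutes_inverses[OF sp] by auto
  have fg: "\<And>b. f b = g (\<sigma> b)" by (simp add: g_def si)
  have sA: "\<And>x. \<sigma> x \<in> A \<longleftrightarrow> x \<in> A" using sp by (simp add: permutes_in_image)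
  have iA: "\<And>x. inv \<sigma> x \<in> A \<longleftrightarrow> x \<in> A" using permutes_inv[OF sp] by (simp add: permutes_in_image)
  have sinj: "inj_on \<sigma> A" "inj_on (inv \<sigma>) A"
    using permutes_inj[OF sp] permutes_inj[OF permutes_inv[OF sp]] by (auto intro: inj_on_subset)
  have fx: "\<And>a b. (a,b)\<in>fst e \<Longrightarrow> fst (f a) < fst (f b)"
   and fy: "\<And>a b. (a,b)\<in>snd e \<Longrightarrow> snd (f a) < snd (f b)" using f1 by (auto simp: Uset_def)
  have gx: "\<And>a b. (a,b)\<in>fst e \<Longrightarrow> fst (g a) < fst (g b)"
  proof -
    fix a b assume "(a,b)\<in>fst e"
    then have "(\<sigma> (inv \<sigma> a), \<sigma> (inv \<sigma> b)) \<in> fst e" by (simp add: si)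
    then show "fst (g a) < fst (g b)" using f2 by (auto simp: Uset_def dact_def g_def)
  qed
  have gy: "\<And>a b. (a,b)\<in>snd e \<Longrightarrow> snd (g a) < snd (g b)"
  proof -
    fix a b assume "(a,b)\<in>snd e"
    then have "(\<sigma> (inv \<sigma> a), \<sigma> (inv \<sigma> b)) \<in> snd e" by (simp add: si)
    then show "snd (g a) < snd (g b)" using f2 by (auto simp: Uset_def dact_def g_def)
  qed
  have hs: "h (\<sigma> a) = h a" if aA: "a \<in> A" for a
  proof -
    have ntx: "\<And>a c b. a\<in>A \<Longrightarrow> c\<in>A \<Longrightarrow> b\<in>A \<Longrightarrow> (a,c)\<in>fst e \<Longrightarrow> (a,b)\<in>fst e \<or> (b,c)\<in>fst e"
      by (simp add: hr; linarith)
    have iAs: "inv \<sigma> ` A \<subseteq> A" "\<sigma> ` A \<subseteq> A" using iA sA by auto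
    have 1: "(a, \<sigma> a) \<notin> fst e"
      apply (rule count_lemma[of A "inv \<sigma>" "\<lambda>x. fst (f x)" "\<lambda>x. fst (g x)"])
      subgoal by (rule fin)
      subgoal by (rule iAs(1))
      subgoal by (rule sinj(2))
      subgoal by (simp add: g_def)
      subgoal by (rule fx)
      subgoal by (rule gx)
      subgoal by (rule aA)
      subgoal using aA sA by blast
      subgoal by (simp add: fg)
      subgoal using ntx aA sA by blast
      done
    have 2: "(\<sigma> a, a) \<notin> fst e"
      apply (rule count_lemma[of A "\<sigma>" "\<lambda>x. fst (g x)" "\<lambda>x. fst (f x)"])
      subgoal by (rule fin)
      subgoal by (rule iAs(2))
      subgoal by (rule sinj(1))
      subgoal by (simp add: fg)
      subgoal by (rule gx)
      subgoal by (rule fx)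
      subgoal using aA sA by blast
      subgoal by (rule aA)
      subgoal by (simp add: fg)
      subgoal using ntx aA sA by blast
      done
    show ?thesis using 1 2 hr aA sA by (meson linorder_neqE_nat)
  qed
  have "\<sigma> a = a" for a
  proof (cases "a \<in> A")
    case False then show ?thesis using sp by (simp add: permutes_def)
  next
    case aA: True
    define B where "B = {b\<in>A. h b = h a}"
    have hsi: "\<And>b. b \<in> A \<Longrightarrow> h (inv \<sigma> b) = h b" using hs iA si by metis
    have nty: "\<And>x c b. x\<in>B \<Longrightarrow> c\<in>B \<Longrightarrow> b\<in>B \<Longrightarrow> (x,c)\<in>snd e \<Longrightarrow> (x,b)\<in>snd e \<or> (b,c)\<in>snd e"
    proof -
      fix x c b assume xB: "x\<in>B" and cB: "c\<in>B" and bB: "b\<in>B" and xc: "(x,c)\<in>snd e"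
      show "(x,b)\<in>snd e \<or> (b,c)\<in>snd e"
      proof (cases "b = x")
        case True then show ?thesis using xc by simp
      next
        case False
        have "(x,b)\<notin>fst e" "(b,x)\<notin>fst e" using xB bB hr by (auto simp: B_def)
        then have "(x,b)\<in>snd e \<or> (b,x)\<in>snd e" using cmp[of x b] xB bB False by (auto simp: B_def)
        then show ?thesis using tr2 xc by (meson transD)
      qed
    qed
    have saB: "\<sigma> a \<in> B" using aA sA hs by (auto simp: B_def)
    have BA: "B \<subseteq> A" by (auto simp: B_def)
    have iBs: "inv \<sigma> ` B \<subseteq> B" "\<sigma> ` B \<subseteq> B" using iA sA hs hsi by (auto simp: B_def)
    have aB: "a \<in> B" using aA by (simp add: B_def)
    have 1: "(a, \<sigma> a) \<notin> snd e"
      apply (rule count_lemma[of B "inv \<sigma>" "\<lambda>x. snd (f x)" "\<lambda>x. snd (g x)"])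
      subgoal using fin BA by (rule finite_subset[rotated])
      subgoal by (rule iBs(1))
      subgoal using sinj(2) BA by (rule inj_on_subset)
      subgoal by (simp add: g_def)
      subgoal by (rule fy)
      subgoal by (rule gy)
      subgoal by (rule aB)
      subgoal by (rule saB)
      subgoal by (simp add: fg)
      subgoal using nty aB saB by blast
      done
    have 2: "(\<sigma> a, a) \<notin> snd e"
      apply (rule count_lemma[of B "\<sigma>" "\<lambda>x. snd (g x)" "\<lambda>x. snd (f x)"])
      subgoal using fin BA by (rule finite_subset[rotated])
      subgoal by (rule iBs(2))
      subgoal using sinj(1) BA by (rule inj_on_subset)
      subgoal by (simp add: fg)
      subgoal by (rule gy)
      subgoal by (rule fy)
      subgoal by (rule saB)
      subgoal by (rule aB)
      subgoal by (simp add: fg)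
      subgoal using nty aB saB by blast
      done
    show ?thesis
    proof (rule ccontr)
      assume ne: "\<sigma> a \<noteq> a"
      have "(a, \<sigma> a)\<notin>fst e" "(\<sigma> a, a)\<notin>fst e" using hr aA sA hs by auto
      then show False using cmp[of a "\<sigma> a"] ne 1 2 aA sA by auto
    qed
  qed
  then show ?thesis by auto
qed



lemma rank_lemma:
  fixes V :: "real set"
  assumes fin: "finite V"
  defines "r \<equiv> (\<lambda>v. card {w\<in>V. w \<le> v})"
  shows "r ` V = {1..card V}" and "\<And>v w. v\<in>V \<Longrightarrow> w\<in>V \<Longrightarrow> r v < r w \<longleftrightarrow> v < w"
proof -
  show lt: "r v < r w \<longleftrightarrow> v < w" if "v\<in>V" "w\<in>V" for v w
  proof
    assume "v < w"
    then have "{u\<in>V. u \<le> v} \<subseteq> {u\<in>V. u \<le> w}" "w \<in> {u\<in>V. u \<le> w}" "w \<notin> {u\<in>V. u \<le> v}"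
      using that by auto
    then have "{u\<in>V. u \<le> v} \<subset> {u\<in>V. u \<le> w}" by blast
    then show "r v < r w" unfolding r_def by (rule psubset_card_mono[rotated]) (simp add: fin)
  next
    assume "r v < r w"
    show "v < w"
    proof (rule ccontr)
      assume "\<not> v < w"
      then have "{u\<in>V. u \<le> w} \<subseteq> {u\<in>V. u \<le> v}" by auto
      then have "r w \<le> r v" unfolding r_def by (rule card_mono[rotated]) (simp add: fin)
      then show False using \<open>r v < r w\<close> by simp
    qed
  qed
  have sub: "r ` V \<subseteq> {1..card V}"
  proof
    fix x assume "x \<in> r ` V"
    then obtain v where v: "v\<in>V" "x = r v" by auto
    have "{w\<in>V. w \<le> v} \<noteq> {}" using v by auto
    then have "1 \<le> r v" unfolding r_def using fin by (simp add: Suc_leI card_gt_0_iff)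
    moreover have "r v \<le> card V" unfolding r_def by (rule card_mono) (auto simp: fin)
    ultimately show "x \<in> {1..card V}" using v by simp
  qed
  have inj: "inj_on r V"
  proof (rule inj_onI)
    fix v w assume "v\<in>V" "w\<in>V" "r v = r w"
    then show "v = w" using lt by (metis less_irrefl linorder_neqE_linordered_idom)
  qed
  have "card (r ` V) = card {1..card V}" using card_image[OF inj] by simp
  then show "r ` V = {1..card V}" using sub by (intro card_subset_eq) auto
qed

lemma cover_exists:
  assumes fin: "finite A" and fO: "f \<in> OConf A"
  shows "\<exists>d\<in>Rplus A. f \<in> Uset A d"
proof -
  have fP: "f \<in> PiE A (\<lambda>_. UNIV)" and inj: "inj_on f A" using fO by (auto simp: OConf_def)
  define V where "V = (\<lambda>a. fst (f a)) ` A"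
  have finV: "finite V" using fin by (simp add: V_def)
  define r where "r = (\<lambda>v. card {w\<in>V. w \<le> v})"
  define h where "h = (\<lambda>a. r (fst (f a)))"
  define rx where "rx = {(a,b)\<in>A\<times>A. fst (f a) < fst (f b)}"
  define ry where "ry = {(a,b)\<in>A\<times>A. fst (f a) = fst (f b) \<and> snd (f a) < snd (f b)}"
  define d where "d = (rx, ry)"
  have hA: "h ` A = {1..card V}"
    using rank_lemma(1)[OF finV] unfolding h_def r_def V_def by (simp add: image_image)
  have hlt: "\<And>a b. a\<in>A \<Longrightarrow> b\<in>A \<Longrightarrow> (a,b)\<in>rx \<longleftrightarrow> h a < h b"
    using rank_lemma(2)[OF finV] unfolding h_def r_def rx_def V_def by auto
  have trx: "trans rx" by (auto simp: rx_def trans_def)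
  have tr_y: "trans ry" by (auto simp: ry_def trans_def)
  have dd: "double_order A d"
    unfolding double_order_def strict_po_def d_def
  proof (intro conjI ballI impI allI)
    fix a b assume ab: "a\<in>A" "b\<in>A" "a\<noteq>b"
    then have "f a \<noteq> f b" using inj by (meson inj_onD)
    then show "(a, b) \<in> fst (rx, ry) \<or> (b, a) \<in> fst (rx, ry) \<or> (a, b) \<in> snd (rx, ry) \<or> (b, a) \<in> snd (rx, ry)"
      using ab by (auto simp: rx_def ry_def prod_eq_iff)
  qed (use trx tr_y in \<open>auto simp: rx_def ry_def\<close>)
  have rd: "regular_double_order A d"
    unfolding regular_double_order_def
  proof (intro conjI allI impI)
    show "semi_linear A (fst d)" unfolding semi_linear_def d_def
      using hA hlt by (auto simp: rx_def)
  qed (use dd in \<open>auto simp: d_def rx_def ry_def\<close>)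
  have "semi_regular A d"
    unfolding semi_regular_def
    apply (intro conjI exI[of _ "{d}"])
    using dd rd trx tr_y by (auto simp: d_def trancl_id)
  moreover have "f \<in> Uset A d" using fP by (auto simp: Uset_def d_def rx_def ry_def)
  ultimately show ?thesis unfolding Rplus_def by blast
qed

lemma Uset_sub_OConf:
  assumes "double_order A d" shows "Uset A d \<subseteq> OConf A"
proof
  fix f assume f: "f \<in> Uset A d"
  have "inj_on f A"
  proof (rule inj_onI, rule ccontr)
    fix a b assume "a\<in>A" "b\<in>A" "f a = f b" "a \<noteq> b"
    then show False using assms f unfolding double_order_def Uset_def by (metis (lifting) mem_Collect_eq order_less_irrefl)
  qed
  then show "f \<in> OConf A" using f by (auto simp: OConf_def Uset_def)
qed

lemma open_Uset:
  assumes fin: "finite A" and d: "fst d \<subseteq> A \<times> A" "snd d \<subseteq> A \<times> A"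
  shows "openin (confspace A) (Uset A d)"
proof -
  let ?T = "confspace A"
  have ts: "topspace ?T = PiE A (\<lambda>_. UNIV)" by (simp add: confspace_def)
  have cp: "continuous_map ?T euclideanreal (\<lambda>f. c (f b) - c (f a))"
    if "a\<in>A" "b\<in>A" "continuous_on UNIV (c :: real\<times>real \<Rightarrow> real)" for a b c
  proof -
    have "continuous_map ?T euclideanreal (\<lambda>f. c (f x))" if "x\<in>A" for x
    proof -
      have p: "continuous_map ?T euclidean (\<lambda>f. f x)" unfolding confspace_def
        by (rule continuous_map_product_projection) (rule \<open>x\<in>A\<close>)
      have cc: "continuous_map euclidean euclideanreal c" using \<open>continuous_on UNIV c\<close> by simp
      have "continuous_map ?T euclideanreal (c \<circ> (\<lambda>f. f x))"
        by (rule continuous_map_compose[OF p cc])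
      then show ?thesis by (simp add: o_def)
    qed
    then show ?thesis using that by (intro continuous_map_diff) auto
  qed
  define U where "U = (\<lambda>(c::real\<times>real\<Rightarrow>real) (p::'a\<times>'a). {x \<in> topspace ?T. (\<lambda>f. c (f (snd p)) - c (f (fst p))) x \<in> {0<..}})"
  have oU: "openin ?T (U c p)" if "p \<in> A\<times>A" "continuous_on UNIV (c :: real\<times>real \<Rightarrow> real)" for c p
    unfolding U_def
    by (rule openin_continuous_map_preimage[OF cp]) (use that in auto)
  have cf: "continuous_on UNIV (fst :: real\<times>real\<Rightarrow>real)" "continuous_on UNIV (snd :: real\<times>real\<Rightarrow>real)"
    using continuous_on_fst[OF continuous_on_id] continuous_on_snd[OF continuous_on_id] by (simp_all add: id_def)
  have o1: "openin ?T ((\<Inter>p\<in>fst d. U fst p) \<inter> topspace ?T)"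
    by (rule openin_INT) (use fin d oU cf in \<open>auto intro: finite_subset\<close>)
  have o2: "openin ?T ((\<Inter>p\<in>snd d. U snd p) \<inter> topspace ?T)"
    by (rule openin_INT) (use fin d oU cf in \<open>auto intro: finite_subset\<close>)
  have "Uset A d = ((\<Inter>p\<in>fst d. U fst p) \<inter> topspace ?T) \<inter> ((\<Inter>p\<in>snd d. U snd p) \<inter> topspace ?T)"
    unfolding Uset_def U_def ts by (auto; fastforce)
  then show ?thesis using o1 o2 by (simp add: openin_Int)
qed



lemma trancl_pull:
  assumes "bij \<sigma>"
  shows "{(a,b). (\<sigma> a, \<sigma> b) \<in> R\<^sup>+} = {(a,b). (\<sigma> a, \<sigma> b) \<in> R}\<^sup>+"
proof (intro set_eqI iffI)
  fix p assume "p \<in> {(a,b). (\<sigma> a, \<sigma> b) \<in> R}\<^sup>+"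
  then show "p \<in> {(a,b). (\<sigma> a, \<sigma> b) \<in> R\<^sup>+}"
  proof (cases p)
    case (Pair a b)
    have "(a,b) \<in> {(a,b). (\<sigma> a, \<sigma> b) \<in> R}\<^sup>+" using \<open>p \<in> _\<close> Pair by simp
    then have "(\<sigma> a, \<sigma> b) \<in> R\<^sup>+"
    proof (induct rule: trancl_induct)
      case (base y) then show ?case by (intro r_into_trancl) simp
    next
      case (step y z)
      then have "(\<sigma> y, \<sigma> z) \<in> R" by simp
      with step(3) show ?case by (rule trancl_into_trancl)
    qed
    then show ?thesis using Pair by simp
  qed
next
  have si: "\<And>x. \<sigma> (inv \<sigma> x) = x" "\<And>x. inv \<sigma> (\<sigma> x) = x"
    using assms by (auto simp: bij_def surj_f_inv_f)
  have *: "(inv \<sigma> x, inv \<sigma> y) \<in> {(a,b). (\<sigma> a, \<sigma> b) \<in> R}\<^sup>+" if "(x,y) \<in> R\<^sup>+" for x y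
    using that
  proof (induct rule: trancl_induct)
    case (base y) then show ?case by (intro r_into_trancl) (simp add: si)
  next
    case (step y z)
    have "(inv \<sigma> y, inv \<sigma> z) \<in> {(a,b). (\<sigma> a, \<sigma> b) \<in> R}" using step(2) by (simp add: si)
    with step(3) show ?case by (rule trancl_into_trancl)
  qed
  fix p assume "p \<in> {(a,b). (\<sigma> a, \<sigma> b) \<in> R\<^sup>+}"
  then show "p \<in> {(a,b). (\<sigma> a, \<sigma> b) \<in> R}\<^sup>+"
    using *[of "\<sigma> (fst p)" "\<sigma> (snd p)"] by (cases p) (simp add: si)
qed

lemma strict_po_pull:
  assumes "strict_po A r" "\<And>x. \<sigma> x \<in> A \<longleftrightarrow> x \<in> A"
  shows "strict_po A {(a,b). (\<sigma> a, \<sigma> b) \<in> r}"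
proof -
  have s: "r \<subseteq> A \<times> A" and t: "trans r" and i: "\<forall>a. (a,a) \<notin> r"
    using assms(1) by (auto simp: strict_po_def)
  have "{(a,b). (\<sigma> a, \<sigma> b) \<in> r} \<subseteq> A \<times> A"
  proof
    fix p assume "p \<in> {(a,b). (\<sigma> a, \<sigma> b) \<in> r}"
    then obtain a b where p: "p = (a,b)" "(\<sigma> a, \<sigma> b) \<in> r" by blast
    then have "\<sigma> a \<in> A" "\<sigma> b \<in> A" using s by blast+
    then show "p \<in> A \<times> A" using p assms(2) by blast
  qed
  moreover have "trans {(a,b). (\<sigma> a, \<sigma> b) \<in> r}"
    using t unfolding trans_def by blast
  ultimately show ?thesis using i unfolding strict_po_def by blast
qed

lemma double_order_dact:
  assumes "double_order A d" "\<sigma> permutes A"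
  shows "double_order A (dact d \<sigma>)"
proof -
  have sA: "\<And>x. \<sigma> x \<in> A \<longleftrightarrow> x \<in> A" using assms(2) by (simp add: permutes_in_image)
  have inj: "\<And>x y. \<sigma> x = \<sigma> y \<longleftrightarrow> x = y" using permutes_inj[OF assms(2)] by (simp add: inj_eq)
  have 1: "strict_po A (fst (dact d \<sigma>))" "strict_po A (snd (dact d \<sigma>))"
    using strict_po_pull[OF _ sA] assms(1) unfolding double_order_def dact_def fst_conv snd_conv by blast+
  have 2: "(a, b) \<in> fst (dact d \<sigma>) \<or> (b, a) \<in> fst (dact d \<sigma>) \<or> (a, b) \<in> snd (dact d \<sigma>) \<or> (b, a) \<in> snd (dact d \<sigma>)"
    if "a\<in>A" "b\<in>A" "a\<noteq>b" for a b
  proof -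
    have "\<sigma> a \<in> A" "\<sigma> b \<in> A" "\<sigma> a \<noteq> \<sigma> b" using that sA inj by auto
    then have "(\<sigma> a, \<sigma> b) \<in> fst d \<or> (\<sigma> b, \<sigma> a) \<in> fst d \<or> (\<sigma> a, \<sigma> b) \<in> snd d \<or> (\<sigma> b, \<sigma> a) \<in> snd d"
      using assms(1) unfolding double_order_def by blast
    then show ?thesis unfolding dact_def by simp
  qed
  show ?thesis using 1 2 unfolding double_order_def by blast
qed

lemma regular_dact:
  assumes "regular_double_order A d" "\<sigma> permutes A"
  shows "regular_double_order A (dact d \<sigma>)"
proof -
  have sA: "\<And>x. \<sigma> x \<in> A \<longleftrightarrow> x \<in> A" using assms(2) by (simp add: permutes_in_image)
  have im: "\<sigma> ` A = A" using assms(2) by (simp add: permutes_image)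
  have R: "double_order A d \<and> semi_linear A (fst d) \<and> (\<forall>a b. (a, b) \<in> fst d \<longrightarrow> (a, b) \<notin> snd d \<and> (b, a) \<notin> snd d)"
    using assms(1) unfolding regular_double_order_def by assumption
  have do: "double_order A d" and sl: "semi_linear A (fst d)" using R by (rule conjunct1, rule conjunct1[OF conjunct2])
  have rg: "\<And>a b. (a, b) \<in> fst d \<Longrightarrow> (a, b) \<notin> snd d \<and> (b, a) \<notin> snd d"
    using R by blast
  have ex: "\<exists>(h :: 'a \<Rightarrow> nat) l. h ` A = {1..l} \<and> (\<forall>a\<in>A. \<forall>b\<in>A. (a, b) \<in> fst d \<longleftrightarrow> h a < h b)"
    using sl unfolding semi_linear_def by (rule conjunct2)
  from ex obtain h :: "'a \<Rightarrow> nat" and l where h1: "h ` A = {1..l}"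
     and h2: "\<forall>a\<in>A. \<forall>b\<in>A. (a, b) \<in> fst d \<longleftrightarrow> h a < h b"
    by (elim exE conjE) (rule that; assumption)
  have "semi_linear A (fst (dact d \<sigma>))"
    unfolding semi_linear_def
  proof (intro conjI exI[of _ "h \<circ> \<sigma>"] exI[of _ l])
    have "strict_po A (fst (dact d \<sigma>))" using double_order_dact[OF do assms(2)] by (simp only: double_order_def)
    then show "fst (dact d \<sigma>) \<subseteq> A \<times> A" by (simp only: strict_po_def)
    have "(h \<circ> \<sigma>) ` A = h ` (\<sigma> ` A)" by (simp only: image_comp)
    then show "(h \<circ> \<sigma>) ` A = {1..l}" by (simp only: im h1)
    show "\<forall>a\<in>A. \<forall>b\<in>A. ((a, b) \<in> fst (dact d \<sigma>)) = ((h \<circ> \<sigma>) a < (h \<circ> \<sigma>) b)"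
    proof (intro ballI)
      fix a b assume "a\<in>A" "b\<in>A"
      then have "\<sigma> a \<in> A" "\<sigma> b \<in> A" using sA by auto
      then show "((a, b) \<in> fst (dact d \<sigma>)) = ((h \<circ> \<sigma>) a < (h \<circ> \<sigma>) b)"
        using h2 by (simp add: dact_def)
    qed
  qed
  moreover have "\<forall>a b. (a, b) \<in> fst (dact d \<sigma>) \<longrightarrow> (a, b) \<notin> snd (dact d \<sigma>) \<and> (b, a) \<notin> snd (dact d \<sigma>)"
    unfolding dact_def using rg by simp
  ultimately show ?thesis using double_order_dact[OF do assms(2)]
    unfolding regular_double_order_def by (intro conjI)
qed

lemma semi_regular_dact:
  assumes "semi_regular A d" "\<sigma> permutes A"
  shows "semi_regular A (dact d \<sigma>)"
proof -
  obtain S where S: "finite S" "S \<noteq> {}" "\<forall>e\<in>S. regular_double_order A e"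
     "d = (trancl (\<Union>(fst ` S)), trancl (\<Union>(snd ` S)))" and do: "double_order A d"
    using assms(1) unfolding semi_regular_def by blast
  have bij: "bij \<sigma>" using assms(2) by (rule permutes_bij)
  define S' where "S' = (\<lambda>e. dact e \<sigma>) ` S"
  have u1: "{(a,b). (\<sigma> a, \<sigma> b) \<in> \<Union>(fst ` S)} = \<Union>(fst ` S')"
    by (auto simp: S'_def dact_def)
  have u2: "{(a,b). (\<sigma> a, \<sigma> b) \<in> \<Union>(snd ` S)} = \<Union>(snd ` S')"
    by (auto simp: S'_def dact_def)
  have "dact d \<sigma> = (trancl (\<Union>(fst ` S')), trancl (\<Union>(snd ` S')))"
    unfolding S(4) dact_def fst_conv snd_conv trancl_pull[OF bij] u1 u2 ..
  moreover have "finite S'" "S' \<noteq> {}" "\<forall>e\<in>S'. regular_double_order A e"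
    using S(1,2,3) regular_dact[OF _ assms(2)] by (auto simp: S'_def)
  ultimately show ?thesis unfolding semi_regular_def using double_order_dact[OF do assms(2)] by blast
qed

lemma Uset_dact:
  assumes sp: "\<sigma> permutes A"
  shows "(\<lambda>f. cact f \<sigma>) ` Uset A d = Uset A (dact d \<sigma>)"
proof -
  have sA: "\<And>x. \<sigma> x \<in> A \<longleftrightarrow> x \<in> A" using sp by (simp add: permutes_in_image)
  have sout: "\<And>x. x \<notin> A \<Longrightarrow> \<sigma> x = x" using sp by (simp add: permutes_def)
  have si: "\<And>x. \<sigma> (inv \<sigma> x) = x" "\<And>x. inv \<sigma> (\<sigma> x) = x"
    using permutes_inverses[OF sp] by auto
  have iA: "\<And>x. inv \<sigma> x \<in> A \<longleftrightarrow> x \<in> A" using permutes_inv[OF sp] by (simp add: permutes_in_image)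
  have iout: "\<And>x. x \<notin> A \<Longrightarrow> inv \<sigma> x = x" using permutes_inv[OF sp] by (simp add: permutes_def)
  show ?thesis
  proof (intro set_eqI iffI)
    fix g assume "g \<in> (\<lambda>f. cact f \<sigma>) ` Uset A d"
    then obtain f where f: "f \<in> Uset A d" "g = f \<circ> \<sigma>" by (auto simp: cact_def)
    have "f \<circ> \<sigma> \<in> PiE A (\<lambda>_. UNIV)" using f(1) sout by (auto simp: Uset_def PiE_def extensional_def)
    then show "g \<in> Uset A (dact d \<sigma>)" using f by (auto simp: Uset_def dact_def)
  next
    fix g assume g: "g \<in> Uset A (dact d \<sigma>)"
    have "g \<circ> inv \<sigma> \<in> PiE A (\<lambda>_. UNIV)" using g iout by (auto simp: Uset_def PiE_def extensional_def)
    moreover have "\<forall>a b. (a, b) \<in> fst d \<longrightarrow> fst ((g \<circ> inv \<sigma>) a) < fst ((g \<circ> inv \<sigma>) b)"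
      using g by (auto simp: Uset_def dact_def si)
    moreover have "\<forall>a b. (a, b) \<in> snd d \<longrightarrow> snd ((g \<circ> inv \<sigma>) a) < snd ((g \<circ> inv \<sigma>) b)"
      using g by (auto simp: Uset_def dact_def si)
    ultimately have "g \<circ> inv \<sigma> \<in> Uset A d" by (simp add: Uset_def)
    moreover have "g = cact (g \<circ> inv \<sigma>) \<sigma>" by (simp add: cact_def fun_eq_iff si)
    ultimately show "g \<in> (\<lambda>f. cact f \<sigma>) ` Uset A d" by blast
  qed
qed

lemma Uset_Inter:
  assumes "J \<noteq> {}"
  shows "Uset A (trancl (\<Union>(fst ` J)), trancl (\<Union>(snd ` J))) = (\<Inter>d\<in>J. Uset A d)"
proof (intro set_eqI iffI)
  fix f assume f: "f \<in> Uset A (trancl (\<Union>(fst ` J)), trancl (\<Union>(snd ` J)))"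
  have P: "f \<in> PiE A (\<lambda>_. UNIV)"
    and fx: "\<forall>a b. (a,b) \<in> (\<Union>(fst ` J))\<^sup>+ \<longrightarrow> fst (f a) < fst (f b)"
    and fy: "\<forall>a b. (a,b) \<in> (\<Union>(snd ` J))\<^sup>+ \<longrightarrow> snd (f a) < snd (f b)"
    using f unfolding Uset_def by simp_all
  show "f \<in> (\<Inter>d\<in>J. Uset A d)"
  proof (rule INT_I)
    fix d assume d: "d \<in> J"
    have "\<forall>a b. (a,b) \<in> fst d \<longrightarrow> fst (f a) < fst (f b)"
    proof (intro allI impI)
      fix a b assume "(a,b) \<in> fst d"
      then have "(a,b) \<in> \<Union>(fst ` J)" using d by blast
      then have "(a,b) \<in> (\<Union>(fst ` J))\<^sup>+" by (rule r_into_trancl')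
      then show "fst (f a) < fst (f b)" using fx by blast
    qed
    moreover have "\<forall>a b. (a,b) \<in> snd d \<longrightarrow> snd (f a) < snd (f b)"
    proof (intro allI impI)
      fix a b assume "(a,b) \<in> snd d"
      then have "(a,b) \<in> \<Union>(snd ` J)" using d by blast
      then have "(a,b) \<in> (\<Union>(snd ` J))\<^sup>+" by (rule r_into_trancl')
      then show "snd (f a) < snd (f b)" using fy by blast
    qed
    ultimately show "f \<in> Uset A d" using P unfolding Uset_def by simp
  qed
next
  fix f assume f: "f \<in> (\<Inter>d\<in>J. Uset A d)"
  obtain d0 where "d0 \<in> J" using assms by blast
  then have P: "f \<in> PiE A (\<lambda>_. UNIV)" using f by (auto simp: Uset_def)
  have 1: "\<And>a b. (a,b)\<in>\<Union>(fst ` J) \<Longrightarrow> fst (f a) < fst (f b)"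
   and 2: "\<And>a b. (a,b)\<in>\<Union>(snd ` J) \<Longrightarrow> snd (f a) < snd (f b)" using f by (auto simp: Uset_def)
  have X: "\<forall>a b. (a,b) \<in> (\<Union>(fst ` J))\<^sup>+ \<longrightarrow> fst (f a) < fst (f b)"
    using mono_trancl[of "\<Union>(fst ` J)" "\<lambda>x. fst (f x)", OF 1] by blast
  have Y: "\<forall>a b. (a,b) \<in> (\<Union>(snd ` J))\<^sup>+ \<longrightarrow> snd (f a) < snd (f b)"
    using mono_trancl[of "\<Union>(snd ` J)" "\<lambda>x. snd (f x)", OF 2] by blast
  show "f \<in> Uset A (trancl (\<Union>(fst ` J)), trancl (\<Union>(snd ` J)))"
    unfolding Uset_def using P X Y by simp
qed

lemma trancl_UN_trancl: "trancl (\<Union>i\<in>I. trancl (F i)) = trancl (\<Union>i\<in>I. F i)"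
proof
  have "(\<Union>i\<in>I. trancl (F i)) \<subseteq> trancl (\<Union>i\<in>I. F i)"
    by (auto intro: trancl_mono)
  then show "trancl (\<Union>i\<in>I. trancl (F i)) \<subseteq> trancl (\<Union>i\<in>I. F i)"
    by (metis trancl_mono_subset trancl_id trans_trancl)
  show "trancl (\<Union>i\<in>I. F i) \<subseteq> trancl (\<Union>i\<in>I. trancl (F i))"
    by (rule trancl_mono_subset) auto
qed

lemma Rplus_finite:
  assumes "finite A" shows "finite (Rplus A)"
proof (rule finite_subset)
  show "Rplus A \<subseteq> Pow (A \<times> A) \<times> Pow (A \<times> A)"
  proof
    fix d assume "d \<in> Rplus A"
    then have "double_order A d" by (simp add: Rplus_def semi_regular_def)
    then have "fst d \<subseteq> A\<times>A" "snd d \<subseteq> A\<times>A" by (simp_all add: double_order_def strict_po_def)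
    then show "d \<in> Pow (A \<times> A) \<times> Pow (A \<times> A)" by (cases d) auto
  qed
  show "finite (Pow (A \<times> A) \<times> Pow (A \<times> A))" using assms by simp
qed

lemma complete_lemma:
  assumes fin: "finite A" and J: "J \<subseteq> Rplus A" "J \<noteq> {}" "(\<Inter>d\<in>J. Uset A d) \<noteq> {}"
  shows "\<exists>e\<in>Rplus A. Uset A e = (\<Inter>d\<in>J. Uset A d)"
proof -
  define e where "e = (trancl (\<Union>(fst ` J)), trancl (\<Union>(snd ` J)))"
  have Ue: "Uset A e = (\<Inter>d\<in>J. Uset A d)" unfolding e_def using Uset_Inter[OF J(2)] .
  obtain f0 where f0: "f0 \<in> Uset A e" using J(3) Ue by auto
  have finJ: "finite J" using Rplus_finite[OF fin] J(1) by (rule finite_subset[rotated])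
  have srJ: "\<And>d. d \<in> J \<Longrightarrow> semi_regular A d" using J(1) unfolding Rplus_def by blast
  have "\<forall>d\<in>J. \<exists>S. finite S \<and> S \<noteq> {} \<and> (\<forall>e\<in>S. regular_double_order A e) \<and>
          d = (trancl (\<Union>(fst ` S)), trancl (\<Union>(snd ` S)))"
  proof
    fix d assume "d \<in> J"
    then have "semi_regular A d" by (rule srJ)
    then show "\<exists>S. finite S \<and> S \<noteq> {} \<and> (\<forall>e\<in>S. regular_double_order A e) \<and>
          d = (trancl (\<Union>(fst ` S)), trancl (\<Union>(snd ` S)))"
      unfolding semi_regular_def by (rule conjunct2)
  qed
  then have "\<exists>SS. \<forall>d\<in>J. finite (SS d) \<and> SS d \<noteq> {} \<and> (\<forall>e\<in>SS d. regular_double_order A e) \<and>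
          d = (trancl (\<Union>(fst ` SS d)), trancl (\<Union>(snd ` SS d)))" by (rule bchoice)
  then obtain SS where SS: "\<forall>d\<in>J. finite (SS d) \<and> SS d \<noteq> {} \<and> (\<forall>e\<in>SS d. regular_double_order A e) \<and>
          d = (trancl (\<Union>(fst ` SS d)), trancl (\<Union>(snd ` SS d)))"
    by blast
  have SSf: "\<And>d. d\<in>J \<Longrightarrow> fst d = trancl (\<Union>(fst ` SS d))" and SSs: "\<And>d. d\<in>J \<Longrightarrow> snd d = trancl (\<Union>(snd ` SS d))"
  proof -
    fix d assume d: "d \<in> J"
    then have "d = (trancl (\<Union>(fst ` SS d)), trancl (\<Union>(snd ` SS d)))" using SS by blast
    then show "fst d = trancl (\<Union>(fst ` SS d))" "snd d = trancl (\<Union>(snd ` SS d))"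
      by (metis fst_conv, metis snd_conv)
  qed
  define S where "S = (\<Union>d\<in>J. SS d)"
  have dJ: "\<And>d. d \<in> J \<Longrightarrow> double_order A d" using srJ unfolding semi_regular_def by blast
  have "\<Union>(fst ` J) = (\<Union>d\<in>J. trancl (\<Union>(fst ` SS d)))"
    by (rule SUP_cong) (simp_all add: SSf)
  moreover have "(\<Union>d\<in>J. \<Union>(fst ` SS d)) = \<Union>(fst ` S)" unfolding S_def by blast
  ultimately have e1: "fst e = trancl (\<Union>(fst ` S))"
    unfolding e_def fst_conv by (simp only: trancl_UN_trancl)
  have "\<Union>(snd ` J) = (\<Union>d\<in>J. trancl (\<Union>(snd ` SS d)))"
    by (rule SUP_cong) (simp_all add: SSs)
  moreover have "(\<Union>d\<in>J. \<Union>(snd ` SS d)) = \<Union>(snd ` S)" unfolding S_def by blast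
  ultimately have e2: "snd e = trancl (\<Union>(snd ` S))"
    unfolding e_def snd_conv by (simp only: trancl_UN_trancl)
  have subd: "\<And>d. d\<in>J \<Longrightarrow> fst d \<subseteq> A\<times>A \<and> snd d \<subseteq> A\<times>A"
  proof -
    fix d assume "d \<in> J"
    then have "double_order A d" by (rule dJ)
    then have "strict_po A (fst d)" "strict_po A (snd d)" unfolding double_order_def by simp_all
    then show "fst d \<subseteq> A\<times>A \<and> snd d \<subseteq> A\<times>A" unfolding strict_po_def by simp
  qed
  have sub: "\<Union>(fst ` J) \<subseteq> A \<times> A" "\<Union>(snd ` J) \<subseteq> A \<times> A"
    using subd by blast+
  have f0x: "\<forall>a b. (a,b) \<in> fst e \<longrightarrow> fst (f0 a) < fst (f0 b)"
   and f0y: "\<forall>a b. (a,b) \<in> snd e \<longrightarrow> snd (f0 a) < snd (f0 b)" using f0 unfolding Uset_def by simp_all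
  obtain d0 where d0: "d0 \<in> J" using J(2) by blast
  have s1: "strict_po A (fst e)"
    unfolding strict_po_def
  proof (intro conjI allI)
    show "fst e \<subseteq> A \<times> A" unfolding e_def fst_conv using sub(1) by (rule trancl_subset_Sigma)
    show "trans (fst e)" unfolding e_def fst_conv by (rule trans_trancl)
    fix a show "(a,a) \<notin> fst e" using f0x by blast
  qed
  have s2: "strict_po A (snd e)"
    unfolding strict_po_def
  proof (intro conjI allI)
    show "snd e \<subseteq> A \<times> A" unfolding e_def snd_conv using sub(2) by (rule trancl_subset_Sigma)
    show "trans (snd e)" unfolding e_def snd_conv by (rule trans_trancl)
    fix a show "(a,a) \<notin> snd e" using f0y by blast
  qed
  have cm: "(a, b) \<in> fst e \<or> (b, a) \<in> fst e \<or> (a, b) \<in> snd e \<or> (b, a) \<in> snd e"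
    if "a\<in>A" "b\<in>A" "a\<noteq>b" for a b
  proof -
    have "(a, b) \<in> fst d0 \<or> (b, a) \<in> fst d0 \<or> (a, b) \<in> snd d0 \<or> (b, a) \<in> snd d0"
      using dJ[OF d0] that unfolding double_order_def by blast
    moreover have "fst d0 \<subseteq> fst e" "snd d0 \<subseteq> snd e" unfolding e_def using d0 by auto
    ultimately show ?thesis by blast
  qed
  have "double_order A e" unfolding double_order_def using s1 s2 cm by blast
  moreover have "finite S" unfolding S_def using finJ SS by blast
  moreover have "S \<noteq> {}" unfolding S_def using d0 SS by blast
  moreover have "\<forall>e\<in>S. regular_double_order A e" unfolding S_def using SS by blast
  moreover have "e = (trancl (\<Union>(fst ` S)), trancl (\<Union>(snd ` S)))" using e1 e2 by (simp add: prod_eq_iff)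
  ultimately have "semi_regular A e" unfolding semi_regular_def by blast
  then show ?thesis using Ue unfolding Rplus_def by blast
qed



lemma comb_less:
  fixes x1 y1 x2 y2 t :: real
  assumes "x1 < y1" "x2 < y2" "0 \<le> t" "t \<le> 1"
  shows "(1-t)*x1 + t*x2 < (1-t)*y1 + t*y2"
proof (cases "t = 1")
  case True then show ?thesis using assms by simp
next
  case False
  then have "0 < 1 - t" using assms by simp
  then have "(1-t)*x1 < (1-t)*y1" using assms by simp
  moreover have "t*x2 \<le> t*y2" using assms by (simp add: mult_left_mono)
  ultimately show ?thesis by linarith
qed

lemma Uset_convex:
  assumes do: "double_order A e" and f: "f \<in> Uset A e" and g: "g \<in> Uset A e" and t: "0 \<le> t" "t \<le> 1"
  shows "(\<lambda>i. if i\<in>A then (1-t) *\<^sub>R f i + t *\<^sub>R g i else undefined) \<in> Uset A e"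
proof -
  have s1: "fst e \<subseteq> A \<times> A" and s2: "snd e \<subseteq> A \<times> A"
    using do unfolding double_order_def strict_po_def by simp_all
  have fx: "\<forall>a b. (a,b) \<in> fst e \<longrightarrow> fst (f a) < fst (f b)"
   and fy: "\<forall>a b. (a,b) \<in> snd e \<longrightarrow> snd (f a) < snd (f b)" using f unfolding Uset_def by simp_all
  have gx: "\<forall>a b. (a,b) \<in> fst e \<longrightarrow> fst (g a) < fst (g b)"
   and gy: "\<forall>a b. (a,b) \<in> snd e \<longrightarrow> snd (g a) < snd (g b)" using g unfolding Uset_def by simp_all
  let ?h = "(\<lambda>i. if i\<in>A then (1-t) *\<^sub>R f i + t *\<^sub>R g i else undefined)"
  have "?h \<in> PiE A (\<lambda>_. UNIV)" by (simp add: PiE_def extensional_def)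
  moreover have "\<forall>a b. (a,b) \<in> fst e \<longrightarrow> fst (?h a) < fst (?h b)"
  proof (intro allI impI)
    fix a b assume ab: "(a,b) \<in> fst e"
    then have "a \<in> A" "b \<in> A" using s1 by auto
    then show "fst (?h a) < fst (?h b)" using comb_less[OF fx[rule_format, OF ab] gx[rule_format, OF ab] t] by simp
  qed
  moreover have "\<forall>a b. (a,b) \<in> snd e \<longrightarrow> snd (?h a) < snd (?h b)"
  proof (intro allI impI)
    fix a b assume ab: "(a,b) \<in> snd e"
    then have "a \<in> A" "b \<in> A" using s2 by auto
    then show "snd (?h a) < snd (?h b)" using comb_less[OF fy[rule_format, OF ab] gy[rule_format, OF ab] t] by simp
  qed
  ultimately show ?thesis unfolding Uset_def by simp
qed

lemma Uset_mono:
  assumes "fst e \<subseteq> fst d" "snd e \<subseteq> snd d"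
  shows "Uset A d \<subseteq> Uset A e"
  using assms unfolding Uset_def by blast

lemma dact_mono:
  assumes "fst e \<subseteq> fst d" "snd e \<subseteq> snd d"
  shows "fst (dact e \<sigma>) \<subseteq> fst (dact d \<sigma>)" "snd (dact e \<sigma>) \<subseteq> snd (dact d \<sigma>)"
  using assms unfolding dact_def by auto

theorem proposition5p6:
  fixes A :: "'a set"
  assumes "finite A"
  shows
    \<comment> \<open>open cover of OConf(A,R^2)\<close>
    "(\<Union>d\<in>Rplus A. Uset A d) = OConf A
     \<and> (\<forall>d\<in>Rplus A. openin (subtopology (confspace A) (OConf A)) (Uset A d))
     \<comment> \<open>Sigma_A-equivariant\<close>
     \<and> (\<forall>\<sigma> d. \<sigma> permutes A \<and> d \<in> Rplus A \<longrightarrow>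
          dact d \<sigma> \<in> Rplus A \<and> (\<lambda>f. cact f \<sigma>) ` Uset A d = Uset A (dact d \<sigma>))
     \<comment> \<open>proper\<close>
     \<and> (\<forall>\<sigma> d. \<sigma> permutes A \<and> \<sigma> \<noteq> id \<and> d \<in> Rplus A \<longrightarrow>
          Uset A d \<inter> Uset A (dact d \<sigma>) = {})
     \<comment> \<open>good\<close>
     \<and> (\<forall>J. J \<subseteq> Rplus A \<and> J \<noteq> {} \<and> (\<Inter>d\<in>J. Uset A d) \<noteq> {} \<longrightarrow>
          contractible_space (subtopology (confspace A) (\<Inter>d\<in>J. Uset A d)))
     \<comment> \<open>complete\<close>
     \<and> (\<forall>J. J \<subseteq> Rplus A \<and> J \<noteq> {} \<and> (\<Inter>d\<in>J. Uset A d) \<noteq> {} \<longrightarrow>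
          (\<exists>e\<in>Rplus A. Uset A e = (\<Inter>d\<in>J. Uset A d)))"
  proof -
  have doR: "\<And>d. d \<in> Rplus A \<Longrightarrow> double_order A d" unfolding Rplus_def semi_regular_def by blast
  have P1: "(\<Union>d\<in>Rplus A. Uset A d) = OConf A"
  proof
    show "(\<Union>d\<in>Rplus A. Uset A d) \<subseteq> OConf A" using Uset_sub_OConf doR by blast
    show "OConf A \<subseteq> (\<Union>d\<in>Rplus A. Uset A d)" using cover_exists[OF assms] by blast
  qed
  have P2: "\<forall>d\<in>Rplus A. openin (subtopology (confspace A) (OConf A)) (Uset A d)"
  proof
    fix d assume d: "d \<in> Rplus A"
    have s: "strict_po A (fst d)" "strict_po A (snd d)" using doR[OF d] unfolding double_order_def by simp_all
    have "openin (confspace A) (Uset A d)"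
      by (rule open_Uset[OF assms]) (use s in \<open>simp_all add: strict_po_def\<close>)
    then have "openin (subtopology (confspace A) (OConf A)) (Uset A d \<inter> OConf A)"
      by (rule openin_subtopology_Int)
    moreover have "Uset A d \<inter> OConf A = Uset A d" using Uset_sub_OConf[OF doR[OF d]] by blast
    ultimately show "openin (subtopology (confspace A) (OConf A)) (Uset A d)" by simp
  qed
  have P3: "\<forall>\<sigma> d. \<sigma> permutes A \<and> d \<in> Rplus A \<longrightarrow>
          dact d \<sigma> \<in> Rplus A \<and> (\<lambda>f. cact f \<sigma>) ` Uset A d = Uset A (dact d \<sigma>)"
  proof (intro allI impI conjI)
    fix \<sigma> d assume a: "\<sigma> permutes A \<and> d \<in> Rplus A"
    show "dact d \<sigma> \<in> Rplus A" using semi_regular_dact a unfolding Rplus_def by blast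
    show "(\<lambda>f. cact f \<sigma>) ` Uset A d = Uset A (dact d \<sigma>)" using Uset_dact a by blast
  qed
  have P4: "\<forall>\<sigma> d. \<sigma> permutes A \<and> \<sigma> \<noteq> id \<and> d \<in> Rplus A \<longrightarrow>
          Uset A d \<inter> Uset A (dact d \<sigma>) = {}"
  proof (intro allI impI)
    fix \<sigma> d assume a: "\<sigma> permutes A \<and> \<sigma> \<noteq> id \<and> d \<in> Rplus A"
    then have "semi_regular A d" unfolding Rplus_def by blast
    then obtain S where S: "S \<noteq> {}" "\<forall>e\<in>S. regular_double_order A e"
       "d = (trancl (\<Union>(fst ` S)), trancl (\<Union>(snd ` S)))"
      unfolding semi_regular_def by blast
    obtain e where e: "e \<in> S" using S(1) by blast
    have sub: "fst e \<subseteq> fst d" "snd e \<subseteq> snd d" using e S(3) by auto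
    show "Uset A d \<inter> Uset A (dact d \<sigma>) = {}"
    proof (rule ccontr)
      assume "Uset A d \<inter> Uset A (dact d \<sigma>) \<noteq> {}"
      then obtain f where f: "f \<in> Uset A d" "f \<in> Uset A (dact d \<sigma>)" by blast
      have "f \<in> Uset A e" using f(1) Uset_mono[OF sub] by blast
      moreover have "f \<in> Uset A (dact e \<sigma>)" using f(2) Uset_mono[OF dact_mono[OF sub]] by blast
      moreover have "regular_double_order A e" using S(2) e by blast
      moreover have "\<sigma> permutes A" using a by blast
      ultimately have "\<sigma> = id" using regular_unique[OF assms] by blast
      then show False using a by blast
    qed
  qed
  have P6: "\<forall>J. J \<subseteq> Rplus A \<and> J \<noteq> {} \<and> (\<Inter>d\<in>J. Uset A d) \<noteq> {} \<longrightarrow>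
          (\<exists>e\<in>Rplus A. Uset A e = (\<Inter>d\<in>J. Uset A d))"
    using complete_lemma[OF assms] by blast
  have P5: "\<forall>J. J \<subseteq> Rplus A \<and> J \<noteq> {} \<and> (\<Inter>d\<in>J. Uset A d) \<noteq> {} \<longrightarrow>
          contractible_space (subtopology (confspace A) (\<Inter>d\<in>J. Uset A d))"
  proof (intro allI impI)
    fix J assume a: "J \<subseteq> Rplus A \<and> J \<noteq> {} \<and> (\<Inter>d\<in>J. Uset A d) \<noteq> {}"
    have "\<exists>e\<in>Rplus A. Uset A e = (\<Inter>d\<in>J. Uset A d)" using P6 a by simp
    then obtain e where e: "e \<in> Rplus A" "Uset A e = (\<Inter>d\<in>J. Uset A d)" by (elim bexE) (rule that)
    have "Uset A e \<noteq> {}" using a e(2) by simp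
    then obtain a0 where a0: "a0 \<in> Uset A e" by blast
    have "contractible_space (subtopology (product_topology (\<lambda>_. euclidean) A) (Uset A e))"
    proof (rule convex_contractible[OF _ a0])
      show "Uset A e \<subseteq> PiE A (\<lambda>_. UNIV)" by (auto simp: Uset_def)
      fix f g and t :: real assume "f \<in> Uset A e" "g \<in> Uset A e" "0 \<le> t" "t \<le> 1"
      then show "(\<lambda>i. if i\<in>A then (1-t) *\<^sub>R f i + t *\<^sub>R g i else undefined) \<in> Uset A e"
        by (rule Uset_convex[OF doR[OF e(1)]])
    qed
    then show "contractible_space (subtopology (confspace A) (\<Inter>d\<in>J. Uset A d))"
      unfolding confspace_def e(2)[symmetric] .
  qed
  show ?thesis by (rule conjI[OF P1 conjI[OF P2 conjI[OF P3 conjI[OF P4 conjI[OF P5 P6]]]]])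
qed

end
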